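(* Let $\mathcal B$ be \textsc{AlternatingOracle}, fix an input and a realization of its random bits, and let $H_{\mathcal B}$ be an eviction graph of $\mathcal B$. Suppose $(a,b_1),\dots,(a,b_d)$ are edges of $H_{\mathcal B}$ such that $(b_1,\dots,b_d)$ is a divisible chain, with $h=d/3$ triples, and let $\psi$ be the maximum of the number of short triples among the first $h/2$ triples (left group) and the number of short triples among the last $h/2$ triples (right group). Then $$\sum_{x=1}^d\eta(b_x)\ge\frac{(d/6-\psi)^2\,k}{20}.$$
   Context: Caching with predictions. Cache of capacity $k$, starting empty; requests $\sigma(1),\dots,\sigma(T)$; $\nu(t)=\min\{s>t:\sigma(s)=\sigma(t)\}$ ($T+1$ if none); prediction $\omega(t)$ of $\nu(t)$ received with request $t$; $\eta(t)=|\nu(t)-\omega(t)|$. Cached pages are identified by the index of their most recent request: $\mathcal I(t)$ is the set of indices $\max\{t'\le t:\sigma(t')=s\}$ over cached pages $s$ after request $t$. \textsc{AlternatingOracle}: on a miss with full cache at time $t$ one of three rules evicts a page: BlindOracle (evict cached $\sigma(i)$, $i\in\mathcal I(t-1)$, with maximal $\omega(i)$); RandomAlg (evict a uniformly random cached page); Corrector (with $W=\{i\in\mathcal I(t-1):\omega(i)<t\}$, evict $\sigma(i)$, $i\in W$, with minimal $\omega(i)$ if $W\ne\emptyset$, otherwise evict as BlindOracle). If $\sigma(t)$ was never requested before, BlindOracle is used; otherwise, if the most recent eviction of page $\sigma(t)$ used BlindOracle / RandomAlg / Corrector, then at time $t$ RandomAlg / Corrector / BlindOracle is used, respectively. Triggering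 and chains: if page $\sigma(i)$ (current index $i$) is evicted and $\nu(i)\le T$, the eviction at time $\nu(i)$ is triggered by it; $(s_1,\dots,s_d)$ is a chain if for each $m<d$, $\sigma(s_{m+1})$ is evicted at time $\nu(s_m)$. Eviction graph: directed graph on $\{1,\dots,T\}$ such that for every edge $(i,j)$ there is a time $t+1$ at which the algorithm evicts $\sigma(j)$, $j\in\mathcal I(t)$, while $i\in\mathcal I(t)$ and $\nu(i)>\nu(j)$; for each $j$ at most one edge $(i,j)$. Triples and divisibility: a chain $(b_1,\dots,b_d)$ is divisible if $d=6m$ for a positive integer $m$ and, for each $i=1,\dots,d/3$, writing $(l_i,c_i,r_i)=(b_{3i-2},b_{3i-1},b_{3i})$ (the $i$-th triple), the page $\sigma(l_i)$ was evicted by the BlindOracle rule, $\sigma(c_i)$ by the RandomAlg rule, and $\sigma(r_i)$ by the Corrector rule. For the $i$-th triple let $L_i=t'-t$, where $t$ is the time of eviction of $\sigma(c_i)$ and $t'$ the time of eviction of $\sigma(r_i)$; the triple is short if $L_i\le k/10$. The left group consists of the first $h/2$ triples and the right group of the last $h/2$ triples, $h=d/3$. *)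

theory Defs
  imports Complex_Main
begin

text \<open>Requests are at times 1..T; sigma t is the page requested at time t, omega t the
prediction received with request t.  Cached pages are identified by the index of their
most recent request.\<close>

datatype rule = BlindOracle | RandomAlg | Corrector

fun next_rule :: "rule \<Rightarrow> rule" where
  "next_rule BlindOracle = RandomAlg"
| "next_rule RandomAlg = Corrector"
| "next_rule Corrector = BlindOracle"

definition nu :: "(nat \<Rightarrow> 'a) \<Rightarrow> nat \<Rightarrow> nat \<Rightarrow> nat" where
  "nu \<sigma> T t = (if \<exists>s. t < s \<and> s \<le> T \<and> \<sigma> s = \<sigma> t
                 then (LEAST s. t < s \<and> s \<le> T \<and> \<sigma> s = \<sigma> t) else T + 1)"

definition eta :: "(nat \<Rightarrow> 'a) \<Rightarrow> (nat \<Rightarrow> nat) \<Rightarrow> nat \<Rightarrow> nat \<Rightarrow> real" where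
  "eta \<sigma> \<omega> T t = \<bar>real (nu \<sigma> T t) - real (\<omega> t)\<bar>"

text \<open>RandomAlg: any cached page (an arbitrary realization of the random bits).
Ties in BlindOracle/Corrector are broken arbitrarily.\<close>
definition valid_choice :: "(nat \<Rightarrow> nat) \<Rightarrow> nat \<Rightarrow> nat set \<Rightarrow> rule \<Rightarrow> nat \<Rightarrow> bool" where
  "valid_choice \<omega> t C r i \<longleftrightarrow> i \<in> C \<and>
     (case r of
        BlindOracle \<Rightarrow> (\<forall>j\<in>C. \<omega> j \<le> \<omega> i)
      | RandomAlg \<Rightarrow> True
      | Corrector \<Rightarrow>
          (let W = {j\<in>C. \<omega> j < t} in
             (W \<noteq> {} \<longrightarrow> i \<in> W \<and> (\<forall>j\<in>W. \<omega> i \<le> \<omega> j)) \<and>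
             (W = {} \<longrightarrow> (\<forall>j\<in>C. \<omega> j \<le> \<omega> i))))"

text \<open>The rule used at a miss with full cache at time t, given evictions E before t.
E s = Some (i, r): at time s the page with current index i was evicted using rule r.\<close>
definition rule_used :: "(nat \<Rightarrow> 'a) \<Rightarrow> (nat \<Rightarrow> (nat \<times> rule) option) \<Rightarrow> nat \<Rightarrow> rule \<Rightarrow> bool" where
  "rule_used \<sigma> E t r \<longleftrightarrow>
     (if \<not> (\<exists>t'. 1 \<le> t' \<and> t' < t \<and> \<sigma> t' = \<sigma> t) then r = BlindOracle
      else (\<exists>s j r'. s < t \<and> E s = Some (j, r') \<and> \<sigma> j = \<sigma> t \<and>
              (\<forall>s' j' r''. s < s' \<and> s' < t \<and> E s' = Some (j', r'') \<longrightarrow> \<sigma> j' \<noteq> \<sigma> t) \<and>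
              r = next_rule r'))"

definition AO_step :: "nat \<Rightarrow> (nat \<Rightarrow> 'a) \<Rightarrow> (nat \<Rightarrow> nat) \<Rightarrow> (nat \<Rightarrow> (nat \<times> rule) option)
                        \<Rightarrow> nat \<Rightarrow> nat set \<Rightarrow> nat set \<Rightarrow> bool" where
  "AO_step k \<sigma> \<omega> E t C C' \<longleftrightarrow>
     (if \<exists>i\<in>C. \<sigma> i = \<sigma> t then E t = None \<and> C' = insert t {i\<in>C. \<sigma> i \<noteq> \<sigma> t}
      else if card C < k then E t = None \<and> C' = insert t C
      else (\<exists>i r. E t = Some (i, r) \<and> rule_used \<sigma> E t r \<and> valid_choice \<omega> t C r i \<and>
                 C' = insert t (C - {i})))"

text \<open>(I, E) is a run of AlternatingOracle with cache capacity k on requests sigma(1..T)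
with predictions omega (for some realization of the random bits and tie-breaking):
I t is the set of cached indices after request t, E t the eviction at time t.\<close>
definition AO_run :: "nat \<Rightarrow> nat \<Rightarrow> (nat \<Rightarrow> 'a) \<Rightarrow> (nat \<Rightarrow> nat) \<Rightarrow> (nat \<Rightarrow> nat set)
                       \<Rightarrow> (nat \<Rightarrow> (nat \<times> rule) option) \<Rightarrow> bool" where
  "AO_run k T \<sigma> \<omega> I E \<longleftrightarrow>
     I 0 = {} \<and> (\<forall>t. (t = 0 \<or> T < t) \<longrightarrow> E t = None) \<and>
     (\<forall>t. 1 \<le> t \<and> t \<le> T \<longrightarrow> AO_step k \<sigma> \<omega> E t (I (t - 1)) (I t))"

definition eviction_graph :: "nat \<Rightarrow> (nat \<Rightarrow> 'a) \<Rightarrow> (nat \<Rightarrow> nat set)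
       \<Rightarrow> (nat \<Rightarrow> (nat \<times> rule) option) \<Rightarrow> (nat \<times> nat) set \<Rightarrow> bool" where
  "eviction_graph T \<sigma> I E G \<longleftrightarrow>
     G \<subseteq> {1..T} \<times> {1..T} \<and>
     (\<forall>(i, j)\<in>G. \<exists>t r. t + 1 \<le> T \<and> E (t + 1) = Some (j, r) \<and> j \<in> I t \<and> i \<in> I t \<and>
                        nu \<sigma> T i > nu \<sigma> T j) \<and>
     (\<forall>i i' j. (i, j) \<in> G \<and> (i', j) \<in> G \<longrightarrow> i = i')"

definition is_chain :: "(nat \<Rightarrow> 'a) \<Rightarrow> nat \<Rightarrow> (nat \<Rightarrow> (nat \<times> rule) option) \<Rightarrow> nat list \<Rightarrow> bool" where
  "is_chain \<sigma> T E b \<longleftrightarrow> (\<forall>m. m + 1 < length b \<longrightarrow> (\<exists>r. E (nu \<sigma> T (b ! m)) = Some (b ! (m + 1), r)))"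

definition evicted_by :: "(nat \<Rightarrow> (nat \<times> rule) option) \<Rightarrow> nat \<Rightarrow> rule \<Rightarrow> bool" where
  "evicted_by E j r \<longleftrightarrow> (\<exists>t. E t = Some (j, r))"

definition divisible_chain :: "(nat \<Rightarrow> 'a) \<Rightarrow> nat \<Rightarrow> (nat \<Rightarrow> (nat \<times> rule) option) \<Rightarrow> nat list \<Rightarrow> bool" where
  "divisible_chain \<sigma> T E b \<longleftrightarrow> is_chain \<sigma> T E b \<and>
     (\<exists>m>0. length b = 6 * m) \<and>
     (\<forall>i < length b div 3. evicted_by E (b ! (3 * i)) BlindOracle \<and>
                            evicted_by E (b ! (3 * i + 1)) RandomAlg \<and>
                            evicted_by E (b ! (3 * i + 2)) Corrector)"

definition short_triple :: "nat \<Rightarrow> (nat \<Rightarrow> (nat \<times> rule) option) \<Rightarrow> nat list \<Rightarrow> nat \<Rightarrow> bool" where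
  "short_triple k E b i \<longleftrightarrow>
     (\<exists>t t' r r'. E t = Some (b ! (3 * i + 1), r) \<and> E t' = Some (b ! (3 * i + 2), r') \<and>
                 real_of_int (int t' - int t) \<le> real k / 10)"

definition psi :: "nat \<Rightarrow> (nat \<Rightarrow> (nat \<times> rule) option) \<Rightarrow> nat list \<Rightarrow> nat" where
  "psi k E b = (let h = length b div 3 in
     max (card {i. i < h div 2 \<and> short_triple k E b i})
         (card {i. h - h div 2 \<le> i \<and> i < h \<and> short_triple k E b i}))"

end

theory Submission
  imports Defs
begin

lemma sum_split_add: "(\<Sum>i<m+(n::nat). f i) = (\<Sum>i<m. f i) + (\<Sum>i<n. f (m+i)::real)"
  by (induct n arbitrary: f) (auto simp: add.assoc)

lemma sum3: "(\<Sum>x<3*(n::nat). f x) = (\<Sum>i<n. f (3*i) + f (3*i+1) + (f (3*i+2)::real))"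
  by (induct n arbitrary: f) (auto simp: add.assoc eval_nat_numeral)

lemma card_split: "card {i. i<(m::nat) \<and> P i} + card {i. i<m \<and> \<not> P i} = m"
proof -
  have "card ({i. i<m \<and> P i} \<union> {i. i<m \<and> \<not> P i}) = card {i. i<m \<and> P i} + card {i. i<m \<and> \<not> P i}"
    by (rule card_Un_disjoint) auto
  moreover have "{i. i<m \<and> P i} \<union> {i. i<m \<and> \<not> P i} = {..<m}" by auto
  ultimately show ?thesis by simp
qed

lemma card_split2: "card {i. m \<le> i \<and> i<(2*m::nat) \<and> P i} + card {i. m \<le> i \<and> i<2*m \<and> \<not> P i} = m"
proof -
  have "card ({i. m \<le> i \<and> i<(2*m::nat) \<and> P i} \<union> {i. m \<le> i \<and> i<2*m \<and> \<not> P i}) = card {i. m \<le> i \<and> i<(2*m::nat) \<and> P i} + card {i. m \<le> i \<and> i<2*m \<and> \<not> P i}"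
    by (rule card_Un_disjoint) auto
  moreover have "{i. m \<le> i \<and> i<(2*m::nat) \<and> P i} \<union> {i. m \<le> i \<and> i<2*m \<and> \<not> P i} = {m..<2*m}" by auto
  ultimately show ?thesis by simp
qed

lemma card_rev: "card {i. i<m \<and> Q (m - Suc i)} = card {i. i<(m::nat) \<and> Q i}"
proof -
  have "{i. i<m \<and> Q (m - Suc i)} = (\<lambda>i. m - Suc i) ` {i. i<m \<and> Q i}"
  proof (rule set_eqI, rule iffI)
    fix x assume "x \<in> {i. i<m \<and> Q (m - Suc i)}"
    then show "x \<in> (\<lambda>i. m - Suc i) ` {i. i<m \<and> Q i}"
      by (intro image_eqI[of _ _ "m - Suc x"]) auto
  qed auto
  moreover have "inj_on (\<lambda>i. m - Suc i) {i. i<m \<and> Q i}" by (auto simp: inj_on_def)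
  ultimately show ?thesis by (simp add: card_image)
qed

lemma card_shift: "card {i. i<m \<and> Q (m+i)} = card {i. m \<le> i \<and> i<(2*m::nat) \<and> Q i}"
proof -
  have "{i. m \<le> i \<and> i<(2*m::nat) \<and> Q i} = (\<lambda>i. m + i) ` {i. i<m \<and> Q (m+i)}"
  proof (rule set_eqI, rule iffI)
    fix x assume "x \<in> {i. m \<le> i \<and> i<(2*m::nat) \<and> Q i}"
    then show "x \<in> (\<lambda>i. m + i) ` {i. i<m \<and> Q (m+i)}"
      by (intro image_eqI[of _ _ "x - m"]) auto
  qed auto
  moreover have "inj_on (\<lambda>i. m + i) {i. i<m \<and> Q (m+i)}" by (auto simp: inj_on_def)
  ultimately show ?thesis by (simp add: card_image)
qed

lemma tri:
  fixes t t' :: "nat \<Rightarrow> real"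
  assumes K: "0 \<le> K" and o1: "\<forall>i<n. t i \<le> t' i" and o2: "\<forall>i. Suc i < n \<longrightarrow> t' i \<le> t (Suc i)"
    and P: "\<forall>i<n. P i \<longrightarrow> K \<le> t' i - t i"
  shows "(\<Sum>i<n. t' i - t 0) \<ge> K * real (card {i. i<n \<and> P i}) * (real (card {i. i<n \<and> P i}) + 1) / 2"
proof -
  have cs: "card {i. i < Suc q \<and> P i} = card {i. i < q \<and> P i} + (if P q then 1 else 0)" for q
  proof -
    have "{i. i < Suc q \<and> P i} = (if P q then insert q {i. i < q \<and> P i} else {i. i < q \<and> P i})"
      by (auto simp: less_Suc_eq)
    then show ?thesis by auto
  qed
  have aux: "i < n \<longrightarrow> t' i - t 0 \<ge> K * real (card {j. j < Suc i \<and> P j})" for i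
  proof (induct i)
    case 0 then show ?case using o1 P cs[of 0] by auto
  next
    case (Suc i)
    show ?case
    proof
      assume "Suc i < n"
      then have "t' i - t 0 \<ge> K * real (card {j. j < Suc i \<and> P j})" "t' i \<le> t (Suc i)"
        "t (Suc i) \<le> t' (Suc i)" "P (Suc i) \<longrightarrow> K \<le> t' (Suc i) - t (Suc i)"
        using Suc o1 o2 P by auto
      then show "t' (Suc i) - t 0 \<ge> K * real (card {j. j < Suc (Suc i) \<and> P j})"
        using cs[of "Suc i"] by (auto simp: distrib_left)
    qed
  qed
  have "q \<le> n \<longrightarrow> (\<Sum>i<q. t' i - t 0) \<ge> K * real (card {i. i<q \<and> P i}) * (real (card {i. i<q \<and> P i}) + 1) / 2" for q
  proof (induct q)
    case 0 then show ?case by simp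
  next
    case (Suc q)
    show ?case
    proof
      assume q: "Suc q \<le> n"
      define c where "c = real (card {i. i<q \<and> P i})"
      have IH: "(\<Sum>i<q. t' i - t 0) \<ge> K * c * (c + 1) / 2" using Suc q c_def by auto
      have A: "t' q - t 0 \<ge> K * real (card {j. j < Suc q \<and> P j})" using aux[of q] q by auto
      show "(\<Sum>i<Suc q. t' i - t 0) \<ge> K * real (card {i. i<Suc q \<and> P i}) * (real (card {i. i<Suc q \<and> P i}) + 1) / 2"
      proof (cases "P q")
        case True
        then have e: "real (card {i. i<Suc q \<and> P i}) = c + 1" using cs[of q] c_def by auto
        have "K * (c+1) * (c+1+1) / 2 = K * c * (c + 1) / 2 + K * (c+1)" by (simp add: field_simps)
        then show ?thesis using IH A e by simp
      next
        case False
        then have e: "real (card {i. i<Suc q \<and> P i}) = c" using cs[of q] c_def by auto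
        have "K * c \<ge> 0" using K c_def by simp
        then show ?thesis using IH A e by simp
      qed
    qed
  qed
  then show ?thesis by simp
qed

lemma step_props:
  assumes "AO_step k \<sigma> \<omega> E t C C'"
  shows "C' \<subseteq> insert t C" "\<forall>j\<in>C'. j \<noteq> t \<longrightarrow> \<sigma> j \<noteq> \<sigma> t"
  using assms unfolding AO_step_def by (auto split: if_splits)

lemma step_evict: "AO_step k \<sigma> \<omega> E t C C' \<Longrightarrow> E t = Some(j,r) \<Longrightarrow> (\<not>(\<exists>i\<in>C. \<sigma> i = \<sigma> t)) \<and> valid_choice \<omega> t C r j \<and> C' = insert t (C - {j})"
  unfolding AO_step_def by (cases "\<exists>i\<in>C. \<sigma> i = \<sigma> t"; cases "card C < k") auto

lemma run_step: "AO_run k T \<sigma> \<omega> I E \<Longrightarrow> 1 \<le> t \<Longrightarrow> t \<le> T \<Longrightarrow> AO_step k \<sigma> \<omega> E t (I (t-1)) (I t)"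
  unfolding AO_run_def by blast

lemma inv:
  assumes run: "AO_run k T \<sigma> \<omega> I E"
  shows "t \<le> T \<Longrightarrow> j \<in> I t \<Longrightarrow> 1 \<le> j \<and> j \<le> t \<and> (\<forall>s. j < s \<and> s \<le> t \<longrightarrow> \<sigma> s \<noteq> \<sigma> j)"
proof (induction t arbitrary: j)
  case 0 then show ?case using run by (simp add: AO_run_def)
next
  case (Suc t)
  have st: "AO_step k \<sigma> \<omega> E (Suc t) (I t) (I (Suc t))" using run_step[OF run, of "Suc t"] Suc.prems by simp
  show ?case
  proof (cases "j = Suc t")
    case True thus ?thesis by auto
  next
    case False
    then have "j \<in> I t" "\<sigma> j \<noteq> \<sigma> (Suc t)" using step_props[OF st] Suc.prems by auto
    then show ?thesis using Suc.IH[of j] Suc.prems by (auto simp: le_Suc_eq)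
  qed
qed

lemma evict_info:
  assumes run: "AO_run k T \<sigma> \<omega> I E" and e: "E s = Some (j, r)"
  shows "1 \<le> s" "s \<le> T" "j \<in> I (s-1)" "j \<notin> I s" "valid_choice \<omega> s (I (s-1)) r j"
    "nu \<sigma> T j > s" "j < s"
proof -
  have sT: "1 \<le> s \<and> s \<le> T"
  proof (rule ccontr)
    assume "\<not> (1 \<le> s \<and> s \<le> T)"
    then have d: "s = 0 \<or> T < s" by auto
    have h: "\<forall>t. (t = 0 \<or> T < t) \<longrightarrow> E t = None" using run[unfolded AO_run_def] by (rule conjunct1[OF conjunct2])
    have "E s = None" using h[rule_format, OF d] .
    then show False using e by simp
  qed
  then show "1 \<le> s" "s \<le> T" by auto
  have st: "AO_step k \<sigma> \<omega> E s (I (s-1)) (I s)" using run_step[OF run] sT by blast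
  from st e have miss: "\<not>(\<exists>i\<in>I(s-1). \<sigma> i = \<sigma> s)" and vc: "valid_choice \<omega> s (I(s-1)) r j"
    and Is: "I s = insert s (I(s-1) - {j})"
    using step_evict[OF st e] by auto
  show "valid_choice \<omega> s (I(s-1)) r j" by (rule vc)
  show jC: "j \<in> I (s-1)" using vc unfolding valid_choice_def by simp
  have iv: "1 \<le> j \<and> j \<le> s-1 \<and> (\<forall>s'. j < s' \<and> s' \<le> s-1 \<longrightarrow> \<sigma> s' \<noteq> \<sigma> j)"
    by (rule inv[OF run]) (use sT jC in auto)
  then show js: "j < s" using sT by auto
  then show "j \<notin> I s" using Is by auto
  show "nu \<sigma> T j > s"
  proof (cases "\<exists>s'. j < s' \<and> s' \<le> T \<and> \<sigma> s' = \<sigma> j")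
    case True
    define L where "L = (LEAST s'. j < s' \<and> s' \<le> T \<and> \<sigma> s' = \<sigma> j)"
    have PL: "j < L \<and> L \<le> T \<and> \<sigma> L = \<sigma> j" unfolding L_def by (rule LeastI_ex[OF True])
    have "L > s"
    proof (rule ccontr)
      assume "\<not> L > s"
      then have "L = s \<or> L \<le> s - 1" by auto
      then show False
      proof
        assume "L = s" then have "\<sigma> s = \<sigma> j" using PL by simp
        then have "\<exists>i\<in>I(s-1). \<sigma> i = \<sigma> s" using jC by (intro bexI[of _ j]) simp_all
        then show False using miss by (rule notE[rotated])
      next
        assume "L \<le> s - 1" then show False using PL iv by blast
      qed
    qed
    then show ?thesis using True L_def unfolding nu_def by simp
  next
    case False
    have "nu \<sigma> T j = T + 1" unfolding nu_def by (rule if_not_P[OF False])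
    then show ?thesis using sT by simp
  qed
qed

lemma persist:
  assumes run: "AO_run k T \<sigma> \<omega> I E" and "j \<notin> I s" "j \<le> s"
  shows "s \<le> t \<Longrightarrow> t \<le> T \<Longrightarrow> j \<notin> I t"
proof (induction t rule: dec_induct)
  case base then show ?case using assms by simp
next
  case (step t)
  have st: "AO_step k \<sigma> \<omega> E (Suc t) (I t) (I (Suc t))" using run_step[OF run, of "Suc t"] step by simp
  then show ?case using step_props(1)[OF st] step assms by auto
qed

lemma uniq:
  assumes run: "AO_run k T \<sigma> \<omega> I E" and e1: "E s1 = Some (j, r1)" and e2: "E s2 = Some (j, r2)"
  shows "s1 = s2"
proof -
  have "\<not> s1 < s2" if a: "E s1 = Some (j, r1)" "E s2 = Some (j, r2)" for s1 s2 r1 r2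
  proof
    assume lt: "s1 < s2"
    have "j \<notin> I s1" "j < s1" using evict_info[OF run a(1)] by auto
    then have "j \<notin> I (s2 - 1)" using persist[OF run, of j s1 "s2-1"] lt evict_info(2)[OF run a(2)] by auto
    then show False using evict_info(3)[OF run a(2)] by simp
  qed
  then show ?thesis using e1 e2 by (meson linorder_neqE_nat)
qed


theorem mainTheorem10:
  fixes k T :: nat and \<sigma> :: "nat \<Rightarrow> 'a" and \<omega> :: "nat \<Rightarrow> nat"
    and I :: "nat \<Rightarrow> nat set" and E :: "nat \<Rightarrow> (nat \<times> rule) option"
    and G :: "(nat \<times> nat) set" and a :: nat and b :: "nat list"
  assumes "AO_run k T \<sigma> \<omega> I E"
    and "eviction_graph T \<sigma> I E G"
    and "\<forall>x<length b. (a, b ! x) \<in> G"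
    and "divisible_chain \<sigma> T E b"
  shows "(\<Sum>x<length b. eta \<sigma> \<omega> T (b ! x))
           \<ge> (real (length b) / 6 - real (psi k E b))\<^sup>2 * real k / 20"
proof -
  note run = assms(1)
  have edge: "\<forall>(i, j)\<in>G. \<exists>t r. t + 1 \<le> T \<and> E (t + 1) = Some (j, r) \<and> j \<in> I t \<and> i \<in> I t \<and>
                        nu \<sigma> T i > nu \<sigma> T j" using assms(2) unfolding eviction_graph_def by blast
  obtain m where m0: "m > 0" and lb: "length b = 6*m" using assms(4) unfolding divisible_chain_def by blast
  have chain: "\<forall>mm. mm + 1 < length b \<longrightarrow> (\<exists>r. E (nu \<sigma> T (b!mm)) = Some (b!(mm+1), r))"
    using assms(4) unfolding divisible_chain_def is_chain_def by blast
  have rules: "\<forall>i < length b div 3. evicted_by E (b!(3*i)) BlindOracle \<and> evicted_by E (b!(3*i+1)) RandomAlg \<and> evicted_by E (b!(3*i+2)) Corrector"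
    using assms(4) unfolding divisible_chain_def by blast
  have ld3: "length b div 3 = 2*m" using lb by simp
  define u where "u x = nu \<sigma> T (b!x)" for x
  have chE: "\<exists>r. E (u x) = Some (b!(x+1), r)" if "x+1 < length b" for x using chain that unfolding u_def by blast
  have mono1: "u x < u (x+1)" if xl: "x+1 < length b" for x
  proof -
    obtain r where "E (u x) = Some (b!(x+1), r)" using chE[OF xl] by blast
    from evict_info(6)[OF run this] show ?thesis unfolding u_def by simp
  qed
  have monoR: "y < length b \<longrightarrow> u x \<le> u y" if "x \<le> y" for x y
    using that
  proof (induction y rule: dec_induct)
    case base then show ?case by simp
  next
    case (step n) then show ?case using mono1[of n] by fastforce
  qed
  have ain: "a \<in> I (s-1)" if il: "x < length b" "E s = Some (b!x, r)" for x s r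
  proof -
    have "(a, b!x) \<in> G" using assms(3) il(1) by blast
    then have "\<exists>t r. t + 1 \<le> T \<and> E (t + 1) = Some (b!x, r) \<and> b!x \<in> I t \<and> a \<in> I t \<and>
                        nu \<sigma> T a > nu \<sigma> T (b!x)" using bspec[OF edge] by fastforce
    then obtain t r' where "E (t+1) = Some (b!x, r')" "a \<in> I t" by blast
    moreover have "s = t+1" using uniq[OF run il(2) calculation(1)] .
    ultimately show ?thesis by simp
  qed
  define w where "w = real (\<omega> a)"
  define tt where "tt i = real (u (3*i))" for i
  define tt' where "tt' i = real (u (3*i+1))" for i
  have BO: "eta \<sigma> \<omega> T (b!(3*i)) \<ge> w - tt i" if il: "i < 2*m" for i
  proof -
    obtain s where es: "E s = Some (b!(3*i), BlindOracle)" using rules il ld3 unfolding evicted_by_def by auto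
    have "a \<in> I (s-1)" using ain[of "3*i" s] es il lb by simp
    moreover have "valid_choice \<omega> s (I(s-1)) BlindOracle (b!(3*i))" by (rule evict_info(5)[OF run es])
    ultimately have le: "\<omega> a \<le> \<omega> (b!(3*i))" unfolding valid_choice_def by simp
    have "- (real (nu \<sigma> T (b!(3*i))) - real (\<omega> (b!(3*i)))) \<le> eta \<sigma> \<omega> T (b!(3*i))"
      unfolding eta_def by (rule abs_ge_minus_self)
    then show ?thesis using le unfolding w_def tt_def u_def by linarith
  qed
  have CR: "eta \<sigma> \<omega> T (b!(3*i+2)) \<ge> tt' i - w" if il: "i < 2*m" "w < tt' i" for i
  proof -
    obtain s where es: "E s = Some (b!(3*i+2), Corrector)" using rules il ld3 unfolding evicted_by_def by auto
    obtain r where ec: "E (u (3*i+1)) = Some (b!(3*i+2), r)" using chE[of "3*i+1"] il lb by auto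
    have ss: "s = u(3*i+1)" using uniq[OF run es ec] .
    have aI: "a \<in> I(s-1)" using ain[of "3*i+2" s] es il lb by simp
    have vc: "valid_choice \<omega> s (I(s-1)) Corrector (b!(3*i+2))" by (rule evict_info(5)[OF run es])
    have nus: "nu \<sigma> T (b!(3*i+2)) > s" by (rule evict_info(6)[OF run es])
    have "\<omega> a < s" using il(2) ss unfolding w_def tt'_def by simp
    then have le: "\<omega> (b!(3*i+2)) \<le> \<omega> a" using vc aI unfolding valid_choice_def Let_def by auto
    have "real (nu \<sigma> T (b!(3*i+2))) - real (\<omega> (b!(3*i+2))) \<le> eta \<sigma> \<omega> T (b!(3*i+2))"
      unfolding eta_def by (rule abs_ge_self)
    moreover have "real s < real (nu \<sigma> T (b!(3*i+2)))" using nus by simp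
    ultimately show ?thesis using le ss unfolding w_def tt'_def by linarith
  qed
  have NS: "tt' i - tt i \<ge> real k / 10" if il: "i < 2*m" "\<not> short_triple k E b i" for i
  proof -
    obtain r1 where e1: "E (u (3*i)) = Some (b!(3*i+1), r1)" using chE[of "3*i"] il lb by auto
    obtain r2 where e2: "E (u (3*i+1)) = Some (b!(3*i+2), r2)" using chE[of "3*i+1"] il lb by auto
    have "\<not> real_of_int (int (u(3*i+1)) - int (u(3*i))) \<le> real k / 10"
      using il(2) e1 e2 unfolding short_triple_def by blast
    then show ?thesis unfolding tt_def tt'_def by simp
  qed
  have o1: "tt i < tt' i" if "i < 2*m" for i using mono1[of "3*i"] that lb unfolding tt_def tt'_def by simp
  have o2: "tt' i \<le> tt (Suc i)" if il: "Suc i < 2*m" for i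
  proof -
    have h1: "u (3*i+1) < u (3*i+2)" using mono1[of "3*i+1"] il lb by simp
    have e: "3*Suc i = Suc (3*i+2)" by simp
    have h2: "u (3*i+2) < u (3*Suc i)" unfolding e using mono1[of "3*i+2"] il lb by simp
    show ?thesis unfolding tt_def tt'_def using h1 h2 by simp
  qed
  have ttmono: "tt i \<le> tt j" if "i \<le> j" "j < 2*m" for i j
    using monoR[of "3*i" "3*j"] that lb unfolding tt_def by simp
  define A where "A i = eta \<sigma> \<omega> T (b!(3*i))" for i
  define B where "B i = eta \<sigma> \<omega> T (b!(3*i+2))" for i
  have nnA: "A i \<ge> 0" for i unfolding A_def eta_def by simp
  have nnB: "B i \<ge> 0" for i unfolding B_def eta_def by simp
  have sumge: "(\<Sum>x<length b. eta \<sigma> \<omega> T (b!x)) \<ge> (\<Sum>i<2*m. A i + B i)"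
  proof -
    have "(\<Sum>x<length b. eta \<sigma> \<omega> T (b!x)) = (\<Sum>i<2*m. eta \<sigma> \<omega> T (b!(3*i)) + eta \<sigma> \<omega> T (b!(3*i+1)) + eta \<sigma> \<omega> T (b!(3*i+2)))"
      using lb sum3[of "\<lambda>x. eta \<sigma> \<omega> T (b!x)" "2*m"] by (simp add: mult.assoc)
    also have "\<dots> \<ge> (\<Sum>i<2*m. A i + B i)"
      by (rule sum_mono) (simp add: A_def B_def eta_def)
    finally show ?thesis .
  qed
  define P where "P i = (\<not> short_triple k E b i)" for i
  define K where "K = real k / 10"
  have K0: "0 \<le> K" unfolding K_def by simp
  have psi_eq: "psi k E b = max (card {i. i < m \<and> short_triple k E b i}) (card {i. m \<le> i \<and> i < 2*m \<and> short_triple k E b i})"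
    unfolding psi_def Let_def ld3 by simp
  have cL: "card {i. i<m \<and> P i} + psi k E b \<ge> m"
    using card_split[of m "short_triple k E b"] psi_eq unfolding P_def by linarith
  have cR: "card {i. m \<le> i \<and> i<2*m \<and> P i} + psi k E b \<ge> m"
    using card_split2[of m "short_triple k E b"] psi_eq unfolding P_def by linarith
  have psim: "psi k E b \<le> m"
  proof -
    have "card {i. i < m \<and> short_triple k E b i} \<le> m"
      using card_split[of m "short_triple k E b"] by linarith
    moreover have "card {i. m \<le> i \<and> i < 2*m \<and> short_triple k E b i} \<le> m"
      using card_split2[of m "short_triple k E b"] by linarith
    ultimately show ?thesis using psi_eq by simp
  qed
  have key: "\<exists>c. m \<le> c + psi k E b \<and> (\<Sum>i<2*m. A i + B i) \<ge> K * real c * (real c + 1) / 2"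
  proof (cases "w \<le> tt m")
    case True
    have T1: "(\<Sum>i<m. tt' (m+i) - tt (m+0)) \<ge> K * real (card {i. i<m \<and> P (m+i)}) * (real (card {i. i<m \<and> P (m+i)}) + 1) / 2"
    proof (rule tri[OF K0])
      show "\<forall>i<m. tt (m+i) \<le> tt' (m+i)" using o1 by (auto simp: less_imp_le)
      show "\<forall>i. Suc i < m \<longrightarrow> tt' (m+i) \<le> tt (m + Suc i)" using o2 by auto
      show "\<forall>i<m. P (m+i) \<longrightarrow> K \<le> tt' (m+i) - tt (m+i)" using NS unfolding P_def K_def by auto
    qed
    have s1: "(\<Sum>i<2*m. A i + B i) = (\<Sum>i<m. A i + B i) + (\<Sum>i<m. A (m+i) + B (m+i))"
      using sum_split_add[where m=m and n=m and f="\<lambda>i. A i + B i"] by (simp add: mult_2)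
    have s2: "(\<Sum>i<m. A i + B i) + (\<Sum>i<m. A (m+i) + B (m+i)) \<ge> (\<Sum>i<m. B (m+i))"
    proof -
      have "(\<Sum>i<m. A i + B i) \<ge> 0" by (rule sum_nonneg) (simp add: add_nonneg_nonneg nnA nnB)
      moreover have "(\<Sum>i<m. A (m+i) + B (m+i)) \<ge> (\<Sum>i<m. B (m+i))" by (rule sum_mono) (simp add: nnA)
      ultimately show ?thesis by linarith
    qed
    have s3: "(\<Sum>i<m. B (m+i)) \<ge> (\<Sum>i<m. tt' (m+i) - tt (m+0))"
    proof (rule sum_mono)
      fix i assume "i \<in> {..<m}"
      then have i: "m+i < 2*m" by simp
      have "tt m \<le> tt (m+i)" using ttmono[of m "m+i"] i by simp
      then have "w < tt' (m+i)" using True o1[OF i] by simp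
      then have "B (m+i) \<ge> tt' (m+i) - w" using CR[OF i] unfolding B_def by simp
      then show "tt' (m+i) - tt (m+0) \<le> B (m+i)" using True by simp
    qed
    have S: "(\<Sum>i<2*m. A i + B i) \<ge> K * real (card {i. i<m \<and> P (m+i)}) * (real (card {i. i<m \<and> P (m+i)}) + 1) / 2"
      using s1 s2 s3 T1 by linarith
    show ?thesis
      by (rule exI[of _ "card {i. i<m \<and> P (m+i)}"]) (use S cR card_shift[of m P] in auto)
  next
    case False
    have T1: "(\<Sum>i<m. - tt (m - Suc i) - - tt' (m - Suc 0)) \<ge> K * real (card {i. i<m \<and> P (m - Suc i)}) * (real (card {i. i<m \<and> P (m - Suc i)}) + 1) / 2"
    proof (rule tri[OF K0])
      show "\<forall>i<m. - tt' (m - Suc i) \<le> - tt (m - Suc i)" using o1 by (auto simp: less_imp_le)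
      show "\<forall>i. Suc i < m \<longrightarrow> - tt (m - Suc i) \<le> - tt' (m - Suc (Suc i))"
      proof (intro allI impI)
        fix i assume "Suc i < m"
        then have e: "m - Suc i = Suc (m - Suc (Suc i))" and l: "Suc (m - Suc (Suc i)) < 2*m" by auto
        show "- tt (m - Suc i) \<le> - tt' (m - Suc (Suc i))" using o2[OF l] e by simp
      qed
      show "\<forall>i<m. P (m - Suc i) \<longrightarrow> K \<le> - tt (m - Suc i) - - tt' (m - Suc i)"
        using NS unfolding P_def K_def by auto
    qed
    have re: "(\<Sum>i<m. - tt (m - Suc i) - - tt' (m - Suc 0)) = (\<Sum>i<m. tt' (m - 1) - tt i)"
      using sum.nat_diff_reindex[of "\<lambda>i. tt' (m - 1) - tt i" m] by simp
    have wm: "w > tt' (m - 1)"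
    proof -
      have "tt' (m-1) \<le> tt (Suc (m-1))" using o2[of "m-1"] m0 by simp
      then show ?thesis using False m0 by simp
    qed
    have s1: "(\<Sum>i<2*m. A i + B i) = (\<Sum>i<m. A i + B i) + (\<Sum>i<m. A (m+i) + B (m+i))"
      using sum_split_add[where m=m and n=m and f="\<lambda>i. A i + B i"] by (simp add: mult_2)
    have s2: "(\<Sum>i<m. A i + B i) + (\<Sum>i<m. A (m+i) + B (m+i)) \<ge> (\<Sum>i<m. A i)"
    proof -
      have "(\<Sum>i<m. A (m+i) + B (m+i)) \<ge> 0" by (rule sum_nonneg) (simp add: add_nonneg_nonneg nnA nnB)
      moreover have "(\<Sum>i<m. A i + B i) \<ge> (\<Sum>i<m. A i)" by (rule sum_mono) (simp add: nnB)
      ultimately show ?thesis by linarith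
    qed
    have s3: "(\<Sum>i<m. A i) \<ge> (\<Sum>i<m. tt' (m - 1) - tt i)"
    proof (rule sum_mono)
      fix i assume "i \<in> {..<m}"
      then have i: "i < 2*m" by simp
      have "A i \<ge> w - tt i" using BO[OF i] unfolding A_def by simp
      then show "tt' (m - 1) - tt i \<le> A i" using wm by simp
    qed
    have S: "(\<Sum>i<2*m. A i + B i) \<ge> K * real (card {i. i<m \<and> P (m - Suc i)}) * (real (card {i. i<m \<and> P (m - Suc i)}) + 1) / 2"
      using s1 s2 s3 T1 re by linarith
    show ?thesis
      by (rule exI[of _ "card {i. i<m \<and> P (m - Suc i)}"]) (use S cL card_rev[of m P] in auto)
  qed
  then obtain c where c1: "m \<le> c + psi k E b" and c2: "(\<Sum>i<2*m. A i + B i) \<ge> K * real c * (real c + 1) / 2" by blast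
  have d0: "0 \<le> real m - real (psi k E b)" using psim by simp
  have d1: "real m - real (psi k E b) \<le> real c" using c1 by linarith
  have sq: "(real m - real (psi k E b))\<^sup>2 \<le> real c * (real c + 1)"
  proof -
    have "(real m - real (psi k E b))\<^sup>2 \<le> (real c)\<^sup>2" using power_mono[OF d1 d0] .
    also have "\<dots> \<le> real c * (real c + 1)" by (simp add: power2_eq_square algebra_simps)
    finally show ?thesis .
  qed
  have "(real (length b) / 6 - real (psi k E b))\<^sup>2 * real k / 20 = (real m - real (psi k E b))\<^sup>2 * (K / 2)"
    unfolding K_def using lb by simp
  also have "\<dots> \<le> real c * (real c + 1) * (K / 2)" using sq K0 by (intro mult_right_mono) auto
  also have "\<dots> = K * real c * (real c + 1) / 2" by simp
  also have "\<dots> \<le> (\<Sum>i<2*m. A i + B i)" by (rule c2)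
  also have "\<dots> \<le> (\<Sum>x<length b. eta \<sigma> \<omega> T (b!x))" by (rule sumge)
  finally show ?thesis .
qed

end
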